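(* For every integer $n\ge 0$, \[ \sum_{k=0}^{n}\Big(-\frac{1}{4}\Big)^k\binom{n}{k}\binom{2k}{k}\,k\,H_{2k} =\frac{n}{(1-2n)2^{1+2n}}\binom{2n}{n}\Big\{3H_n-4H_{2n}-\frac{2+4n}{1-2n}\Big\}. \]
   Context: For an integer $m\ge 0$, $H_m$ denotes the $m$-th harmonic number: $H_0=0$ and $H_m=\sum_{j=1}^m \frac1j$ for $m\ge1$. $\binom{n}{k}$ is the usual binomial coefficient. *)

theory Defs
  imports "HOL-Analysis.Analysis"
begin

end

theory Submission
  imports Defs
begin

lemma key_poly:
  fixes n x c c1 d H a b :: real
  assumes c1: "(x+1)*c1 = c*(n-x)" and a: "a*(2*x+3) = 1" and b: "b*(2*x+4) = 1"
  shows "4*n*(n+1)*((c+c1)*(x+1)*d*H) - 2*(2*n-1)*(n+1)*(c1*(x+1)*d*H) + (2*n+5)*(c1*(x+1)*d)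
   = c1*(-(2*x+3)*b*d) * (-4*(n+1)*(x+1)*(x+2)*(H + a + b) + 2*(x+1)*(n-x-1))
     - c*d*(-4*(n+1)*x*(x+1)*H + 2*x*(n-x))"
  using c1 a b by algebra

lemma key_poly0:
  fixes n x c c1 d b :: real
  assumes c1: "(x+1)*c1 = c*(n-x)" and b: "b*(2*x+4) = 1"
  shows "4*n*(n+1)*((c+c1)*(x+1)*d) - 2*(2*n-1)*(n+1)*(c1*(x+1)*d)
   = c1*(-(2*x+3)*b*d) * (-4*(n+1)*(x+1)*(x+2))
     - c*d*(-4*(n+1)*x*(x+1))"
  using c1 b by algebra

lemma aux3: assumes "(y::real) \<ge> 0" "(y+1)*((y+1)*A) = (2*y+2)*((2*y+1)*B)" shows "A*(y+1) = 2*(2*y+1)*B"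
proof -
  have "(y+1)*(A*(y+1) - 2*(2*y+1)*B) = 0" using assms(2) by (simp add: algebra_simps)
  then show ?thesis using assms(1) by simp
qed

lemma cb: "real ((2*Suc j) choose Suc j) * (real j+1) = 2*(2*real j+1) * real ((2*j) choose j)"
proof -
  have a: "Suc j * (Suc (Suc (2*j)) choose Suc j) = Suc (Suc (2*j)) * (Suc (2*j) choose j)"
    by (rule Suc_times_binomial)
  have s: "(Suc (2*j) choose j) = (Suc (2*j) choose Suc j)"
    by (subst binomial_symmetric) auto
  have b: "Suc j * (Suc (2*j) choose Suc j) = Suc (2*j) * ((2*j) choose j)"
    by (rule Suc_times_binomial)
  have e: "2*Suc j = Suc (Suc (2*j))" by simp
  have n1: "Suc j * (2*Suc j choose Suc j) = Suc (Suc (2*j)) * (Suc (2*j) choose Suc j)"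
    unfolding e a s ..
  have n2: "Suc j * (Suc j * (2*Suc j choose Suc j)) = Suc (Suc (2*j)) * (Suc (2*j) * ((2*j) choose j))"
    unfolding n1 mult.left_commute[of "Suc j"] b ..
  have r: "real (Suc j * (Suc j * (2*Suc j choose Suc j))) = real (Suc (Suc (2*j)) * (Suc (2*j) * ((2*j) choose j)))"
    unfolding n2 ..
  have r2: "(real j+1)*((real j+1)*real (2*Suc j choose Suc j)) = (2*real j+2)*((2*real j+1)*real ((2*j) choose j))"
  proof -
    have f: "real (Suc j) = real j + 1" "real (Suc (Suc (2*j))) = 2*real j+2" "real (Suc (2*j)) = 2*real j+1" by simp_all
    show ?thesis using r unfolding of_nat_mult f .
  qed
  show ?thesis using aux3[OF _ r2] by simp
qed

lemma absorb: "real (Suc j) * real (n choose Suc j) = real (n choose j) * (real n - real j)"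
proof -
  have "Suc j * (Suc n choose Suc j) = Suc n * (n choose j)" by (rule Suc_times_binomial)
  then have "real (Suc j) * (real (n choose j) + real (n choose Suc j)) = real (Suc n) * real (n choose j)"
    by (metis binomial_Suc_Suc of_nat_add of_nat_mult)
  then show ?thesis by (simp add: algebra_simps)
qed

lemma aux4: "(y::real) \<ge> 0 \<Longrightarrow> A*(y+2) = 2*(2*y+3)*B \<Longrightarrow> A = 2*(2*y+3)*B/(y+2)"
  by (simp add: field_simps)

definition dd :: "nat \<Rightarrow> real" where "dd k = (-1/4)^k * real ((2*k) choose k)"

lemma aux1: "(y::real) \<ge> 0 \<Longrightarrow> (-1/4)*p*(2*(2*y+3)*q/(y+2)) = -(2*y+3)*(1/(2*y+4))*(p*q)"
  by (simp add: field_simps)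

lemma dd_Suc: "dd (Suc (Suc j)) = -(2*real j+3) * (1/(2*real j+4)) * dd (Suc j)"
proof -
  have f: "real (Suc j) + 1 = real j + 2" "2*real (Suc j) + 1 = 2*real j+3" by simp_all
  have e: "real ((2*Suc (Suc j)) choose Suc (Suc j)) = 2*(2*real j+3) * real ((2*Suc j) choose Suc j) / (real j + 2)"
    using aux4[OF _ cb[of "Suc j", unfolded f]] by simp
  have "dd (Suc (Suc j)) = (-1/4) * (-1/4)^(Suc j) * real ((2*Suc (Suc j)) choose Suc (Suc j))"
    unfolding dd_def by (simp only: power_Suc[of "-1/4::real" "Suc j"])
  also have "\<dots> = -(2*real j+3) * (1/(2*real j+4)) * ((-1/4)^(Suc j) * real ((2*Suc j) choose Suc j))"
    unfolding e by (rule aux1) simp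
  finally show ?thesis unfolding dd_def .
qed

lemma harm2: "harm (2*Suc (Suc j)) = (harm (2*Suc j) :: real) + 1/(2*real j+3) + 1/(2*real j+4)"
proof -
  have e: "2*Suc (Suc j) = Suc (Suc (2*Suc j))" by simp
  have f: "real (Suc (2*Suc j)) = 2*real j+3" "real (Suc (Suc (2*Suc j))) = 2*real j+4" by simp_all
  show ?thesis unfolding e harm_Suc f by (simp add: divide_inverse add.assoc)
qed

definition Fh :: "nat \<Rightarrow> nat \<Rightarrow> real" where
  "Fh n k = real (n choose k) * real k * dd k * harm (2*k)"
definition F0 :: "nat \<Rightarrow> nat \<Rightarrow> real" where
  "F0 n k = real (n choose k) * real k * dd k"
definition Gh :: "nat \<Rightarrow> nat \<Rightarrow> real" where
  "Gh n k = (if k = 0 then 0 else real (n choose (k-1)) * dd k *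
     (-4*(real n+1)*(real k - 1)*real k*harm (2*k) + 2*(real k - 1)*(real n + 1 - real k)))"
definition G0 :: "nat \<Rightarrow> nat \<Rightarrow> real" where
  "G0 n k = (if k = 0 then 0 else real (n choose (k-1)) * dd k *
     (-4*(real n+1)*(real k - 1)*real k))"

lemma stepH: "4*real n*(real n+1)*Fh (Suc n) k - 2*(2*real n-1)*(real n+1)*Fh n k + (2*real n+5)*F0 n k
   = Gh n (Suc k) - Gh n k"
proof (cases k)
  case 0 then show ?thesis by (simp add: Fh_def F0_def Gh_def)
next
  case (Suc j)
  have c1: "(real j+1)*real (n choose Suc j) = real (n choose j)*(real n - real j)"
    using absorb[of j n] by (simp add: add.commute)
  have a: "(1/(2*real j+3))*(2*real j+3) = 1" by (simp add: field_simps)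
  have b: "(1/(2*real j+4))*(2*real j+4) = 1" by (simp add: field_simps)
  define x where "x = real j"
  define c where "c = real (n choose j)"
  define c1 where "c1 = real (n choose Suc j)"
  define d where "d = dd (Suc j)"
  define H where "H = (harm (2*Suc j) :: real)"
  have s1: "real (Suc j) = x+1" by (simp add: x_def)
  have s2: "real (Suc (Suc j)) = x+2" by (simp add: x_def)
  have s3: "x+1-1 = x" "x+2-1 = x+1" "real n + 1 - (x+1) = real n - x" "real n + 1 - (x+2) = real n - x - 1"
    by simp_all
  note fo = c_def[symmetric] c1_def[symmetric] d_def[symmetric] H_def[symmetric]
  have e1: "Fh (Suc n) (Suc j) = (c+c1)*(x+1)*d*H"
    unfolding Fh_def binomial_Suc_Suc of_nat_add s1 fo ..
  have e2: "Fh n (Suc j) = c1*(x+1)*d*H"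
    unfolding Fh_def s1 fo ..
  have e3: "F0 n (Suc j) = c1*(x+1)*d"
    unfolding F0_def s1 fo ..
  have e4a: "Gh n (Suc (Suc j)) = c1 * dd (Suc (Suc j)) * (-4*(real n+1)*(x+1)*(x+2)*harm (2*Suc (Suc j)) + 2*(x+1)*(real n-x-1))"
    unfolding Gh_def s2 s3 diff_Suc_1 fo by (simp only: nat.distinct if_False)
  have e4: "Gh n (Suc (Suc j)) = c1*(-(2*x+3)*(1/(2*x+4))*d) * (-4*(real n+1)*(x+1)*(x+2)*(H + 1/(2*x+3) + 1/(2*x+4)) + 2*(x+1)*(real n-x-1))"
    unfolding e4a dd_Suc harm2 x_def d_def H_def ..
  have e5: "Gh n (Suc j) = c*d*(-4*(real n+1)*x*(x+1)*H + 2*x*(real n-x))"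
    unfolding Gh_def s1 s3 diff_Suc_1 fo by (simp only: nat.distinct if_False)
  have K: "4*real n*(real n+1)*((c+c1)*(x+1)*d*H) - 2*(2*real n-1)*(real n+1)*(c1*(x+1)*d*H) + (2*real n+5)*(c1*(x+1)*d)
   = c1*(-(2*x+3)*(1/(2*x+4))*d) * (-4*(real n+1)*(x+1)*(x+2)*(H + 1/(2*x+3) + 1/(2*x+4)) + 2*(x+1)*(real n-x-1))
     - c*d*(-4*(real n+1)*x*(x+1)*H + 2*x*(real n-x))"
    using key_poly[OF c1[folded x_def c_def c1_def] a[folded x_def] b[folded x_def]] .
  show ?thesis unfolding Suc e1 e2 e3 e4 e5 by (rule K)
qed


lemma step0: "4*real n*(real n+1)*F0 (Suc n) k - 2*(2*real n-1)*(real n+1)*F0 n k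
   = G0 n (Suc k) - G0 n k"
proof (cases k)
  case 0 then show ?thesis by (simp add: F0_def G0_def)
next
  case (Suc j)
  have c1: "(real j+1)*real (n choose Suc j) = real (n choose j)*(real n - real j)"
    using absorb[of j n] by (simp add: add.commute)
  have a: "(1/(2*real j+3))*(2*real j+3) = 1" by (simp add: field_simps)
  have b: "(1/(2*real j+4))*(2*real j+4) = 1" by (simp add: field_simps)
  define x where "x = real j"
  define c where "c = real (n choose j)"
  define c1 where "c1 = real (n choose Suc j)"
  define d where "d = dd (Suc j)"
  define H where "H = (harm (2*Suc j) :: real)"
  have s1: "real (Suc j) = x+1" by (simp add: x_def)
  have s2: "real (Suc (Suc j)) = x+2" by (simp add: x_def)
  have s3: "x+1-1 = x" "x+2-1 = x+1" "real n + 1 - (x+1) = real n - x" "real n + 1 - (x+2) = real n - x - 1"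
    by simp_all
  note fo = c_def[symmetric] c1_def[symmetric] d_def[symmetric] H_def[symmetric]
  have e1: "F0 (Suc n) (Suc j) = (c+c1)*(x+1)*d"
    unfolding F0_def binomial_Suc_Suc of_nat_add s1 fo ..
  have e3: "F0 n (Suc j) = c1*(x+1)*d"
    unfolding F0_def s1 fo ..
  have e4a: "G0 n (Suc (Suc j)) = c1 * dd (Suc (Suc j)) * (-4*(real n+1)*(x+1)*(x+2))"
    unfolding G0_def s2 s3 diff_Suc_1 fo by (simp only: nat.distinct if_False)
  have e4: "G0 n (Suc (Suc j)) = c1*(-(2*x+3)*(1/(2*x+4))*d) * (-4*(real n+1)*(x+1)*(x+2))"
    unfolding e4a dd_Suc x_def d_def ..
  have e5: "G0 n (Suc j) = c*d*(-4*(real n+1)*x*(x+1))"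
    unfolding G0_def s1 s3 diff_Suc_1 fo by (simp only: nat.distinct if_False)
  have K: "4*real n*(real n+1)*((c+c1)*(x+1)*d) - 2*(2*real n-1)*(real n+1)*(c1*(x+1)*d)
   = c1*(-(2*x+3)*(1/(2*x+4))*d) * (-4*(real n+1)*(x+1)*(x+2))
     - c*d*(-4*(real n+1)*x*(x+1))"
    using key_poly0[OF c1[folded x_def c_def c1_def] b[folded x_def]] .
  show ?thesis unfolding Suc e1 e3 e4 e5 by (rule K)
qed


definition SS :: "nat \<Rightarrow> real" where "SS n = (\<Sum>k=0..n. Fh n k)"
definition TT :: "nat \<Rightarrow> real" where "TT n = (\<Sum>k=0..n. F0 n k)"

lemma sum_stepH: "4*real n*(real n+1)*SS (Suc n) - 2*(2*real n-1)*(real n+1)*SS n + (2*real n+5)*TT n = 0"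
proof -
  have tel: "(\<Sum>k=0..Suc n. 4*real n*(real n+1)*Fh (Suc n) k - 2*(2*real n-1)*(real n+1)*Fh n k + (2*real n+5)*F0 n k)
      = Gh n (Suc (Suc n)) - Gh n 0"
    unfolding stepH by (rule sum_Suc_diff) simp
  have g1: "Gh n (Suc (Suc n)) = 0" unfolding Gh_def by (simp add: binomial_eq_0)
  have g0: "Gh n 0 = 0" unfolding Gh_def by simp
  have f1: "Fh n (Suc n) = 0" unfolding Fh_def by (simp add: binomial_eq_0)
  have f2: "F0 n (Suc n) = 0" unfolding F0_def by (simp add: binomial_eq_0)
  have s1: "(\<Sum>k=0..Suc n. Fh n k) = SS n" unfolding SS_def using f1 by simp
  have s2: "(\<Sum>k=0..Suc n. F0 n k) = TT n" unfolding TT_def using f2 by simp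
  have "(\<Sum>k=0..Suc n. 4*real n*(real n+1)*Fh (Suc n) k - 2*(2*real n-1)*(real n+1)*Fh n k + (2*real n+5)*F0 n k)
    = 4*real n*(real n+1)*(\<Sum>k=0..Suc n. Fh (Suc n) k) - 2*(2*real n-1)*(real n+1)*(\<Sum>k=0..Suc n. Fh n k) + (2*real n+5)*(\<Sum>k=0..Suc n. F0 n k)"
    by (simp only: sum.distrib sum_subtractf sum_distrib_left)
  then show ?thesis using tel g1 g0 s1 s2 unfolding SS_def[of "Suc n"] by simp
qed

lemma sum_step0: "4*real n*(real n+1)*TT (Suc n) - 2*(2*real n-1)*(real n+1)*TT n = 0"
proof -
  have tel: "(\<Sum>k=0..Suc n. 4*real n*(real n+1)*F0 (Suc n) k - 2*(2*real n-1)*(real n+1)*F0 n k)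
      = G0 n (Suc (Suc n)) - G0 n 0"
    unfolding step0 by (rule sum_Suc_diff) simp
  have g1: "G0 n (Suc (Suc n)) = 0" unfolding G0_def by (simp add: binomial_eq_0)
  have g0: "G0 n 0 = 0" unfolding G0_def by simp
  have f2: "F0 n (Suc n) = 0" unfolding F0_def by (simp add: binomial_eq_0)
  have s2: "(\<Sum>k=0..Suc n. F0 n k) = TT n" unfolding TT_def using f2 by simp
  have "(\<Sum>k=0..Suc n. 4*real n*(real n+1)*F0 (Suc n) k - 2*(2*real n-1)*(real n+1)*F0 n k)
    = 4*real n*(real n+1)*(\<Sum>k=0..Suc n. F0 (Suc n) k) - 2*(2*real n-1)*(real n+1)*(\<Sum>k=0..Suc n. F0 n k)"
    by (simp only: sum_subtractf sum_distrib_left)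
  then show ?thesis using tel g1 g0 s2 unfolding TT_def[of "Suc n"] by simp
qed

lemma aux5:
  fixes y Cm C2 T2 P iP ey ez :: real
  assumes iP: "P*iP = 1" and ey: "ey*(y+1) = 1" and ez: "ez*(y+2) = 1"
    and rec: "4*(y+1)*(y+2)*T2 - 2*(2*y+1)*(y+2)*(-Cm*iP/2) = 0"
    and C2: "C2*(y+1) = 2*(2*y+1)*Cm"
  shows "T2 = -C2*iP/8"
  using assms by algebra

lemma TT_closed: "TT (Suc m) = -real ((2*m) choose m)/(2*4^m)"
proof (induction m)
  case 0
  show ?case by (simp add: TT_def F0_def dd_def)
next
  case (Suc m)
  have r: "4*real (Suc m)*(real (Suc m)+1)*TT (Suc (Suc m)) - 2*(2*real (Suc m)-1)*(real (Suc m)+1)*TT (Suc m) = 0"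
    by (rule sum_step0)
  have f: "real (Suc m) = real m + 1" "real m + 1 + 1 = real m + 2" "2*(real m+1) - 1 = 2*real m + 1" by simp_all
  have r2: "4*(real m+1)*(real m+2)*TT (Suc (Suc m)) - 2*(2*real m+1)*(real m+2)*(-real ((2*m) choose m)/(2*4^m)) = 0"
    using r unfolding Suc.IH f .
  have P: "(4::real)^m * (1/4^m) = 1" by simp
  have ey: "(1/(real m+1))*(real m+1) = 1" by (simp add: field_simps)
  have ez: "(1/(real m+2))*(real m+2) = 1" by (simp add: field_simps)
  have r3: "4*(real m+1)*(real m+2)*TT (Suc (Suc m)) - 2*(2*real m+1)*(real m+2)*(-real ((2*m) choose m)*(1/4^m)/2) = 0"
    using r2 by simp
  have "TT (Suc (Suc m)) = -real ((2*Suc m) choose Suc m)*(1/4^m)/8"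
    by (rule aux5[OF P ey ez r3 cb[of m]])
  then show ?case by simp
qed

lemma final_alg:
  fixes y Q iQ C2 Cm C3 h1 h2 S2 T1 R1 uu zz w p q e :: real
  assumes rec: "4*(y+1)*(y+2)*S2 - 2*(2*y+1)*(y+2)*R1 + (2*y+7)*T1 = 0"
  and T1: "T1 = -4*Cm*iQ" and C2: "C2*(y+1) = 2*(2*y+1)*Cm" and C3: "C3*(y+2) = 2*(2*y+3)*C2"
  and R1: "R1 = (y+1)*uu*iQ*C2*(3*h1 - 4*h2 - (2+4*(y+1))*uu)"
  and iQ: "Q*iQ = 1" and uu: "uu*(1-2*(y+1)) = 1" and zz: "zz*(1-2*(y+2)) = 1"
  and w: "w*(y+2) = 1" and p: "p*(2*y+3) = 1" and q: "q*(2*y+4) = 1" and e: "e*(y+1) = 1"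
  shows "S2 = (y+2)*zz*(iQ/4)*C3*(3*(h1+w) - 4*(h2+p+q) - (2+4*(y+2))*zz)"
  using assms by algebra

definition RR :: "nat \<Rightarrow> real" where
  "RR n = real n / ((1 - 2 * real n) * 2 ^ (1 + 2*n)) * real ((2*n) choose n)
      * (3 * harm n - 4 * harm (2*n) - (2 + 4 * real n) / (1 - 2 * real n))"

lemma gen_form:
  fixes a Q C X :: real
  assumes "Q \<noteq> 0" "1 - 2*a \<noteq> 0"
  shows "a/((1-2*a)*Q)*C*(X - (2+4*a)/(1-2*a)) = a*(1/(1-2*a))*(1/Q)*C*(X - (2+4*a)*(1/(1-2*a)))"
  using assms by (simp add: field_simps)

lemma SS_RR: "SS (Suc m) = RR (Suc m)"
proof (induction m)
  case 0
  have h1: "harm (Suc 0) = (1::real)" unfolding harm_def by simp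
  have h2: "harm 2 = (3/2::real)" unfolding numeral_2_eq_2 harm_Suc[of "Suc 0"] h1 by simp
  show ?case by (simp add: SS_def RR_def Fh_def dd_def h1 h2)
next
  case (Suc m)
  define y where "y = real m"
  define Q :: real where "Q = 2 ^ (1 + 2*Suc m)"
  define C2 where "C2 = real ((2*Suc m) choose Suc m)"
  define Cm where "Cm = real ((2*m) choose m)"
  define C3 where "C3 = real ((2*Suc (Suc m)) choose Suc (Suc m))"
  define h1 :: real where "h1 = harm (Suc m)"
  define h2 :: real where "h2 = harm (2*Suc m)"
  have y0: "y \<ge> 0" unfolding y_def by simp
  have Q0: "Q > 0" unfolding Q_def by simp
  have Q4: "Q = 8*4^m" unfolding Q_def by (simp add: power_add power_mult)
  have rec0: "4*real (Suc m)*(real (Suc m)+1)*SS (Suc (Suc m)) - 2*(2*real (Suc m)-1)*(real (Suc m)+1)*SS (Suc m) + (2*real (Suc m)+5)*TT (Suc m) = 0"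
    by (rule sum_stepH)
  have f: "real (Suc m) = y + 1" "y + 1 + 1 = y + 2" "2*(y+1) - 1 = 2*y + 1" "2*(y+1)+5 = 2*y+7"
    unfolding y_def by simp_all
  have rec: "4*(y+1)*(y+2)*SS (Suc (Suc m)) - 2*(2*y+1)*(y+2)*SS (Suc m) + (2*y+7)*TT (Suc m) = 0"
    using rec0 unfolding f .
  have T1: "TT (Suc m) = -4*Cm*(1/Q)" unfolding TT_closed Q4 Cm_def by simp
  have C2r: "C2*(y+1) = 2*(2*y+1)*Cm" unfolding C2_def Cm_def y_def by (rule cb)
  have ff: "real (Suc m) + 1 = y + 2" "2*real (Suc m)+1 = 2*y+3" unfolding y_def by simp_all
  have C3r: "C3*(y+2) = 2*(2*y+3)*C2" unfolding C3_def C2_def using cb[of "Suc m", unfolded ff] .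
  have R1: "SS (Suc m) = (y+1)*(1/(1-2*(y+1)))*(1/Q)*C2*(3*h1 - 4*h2 - (2+4*(y+1))*(1/(1-2*(y+1))))"
    unfolding Suc.IH RR_def f(1) h1_def[symmetric] h2_def[symmetric] C2_def[symmetric] Q_def[symmetric]
    by (rule gen_form) (use Q0 y0 in auto)
  have fin: "SS (Suc (Suc m)) = (y+2)*(1/(1-2*(y+2)))*((1/Q)/4)*C3*(3*(h1+1/(y+2)) - 4*(h2+1/(2*y+3)+1/(2*y+4)) - (2+4*(y+2))*(1/(1-2*(y+2))))"
    by (rule final_alg[OF rec T1 C2r C3r R1, where e="1/(y+1)"]) (use Q0 y0 in \<open>simp_all add: field_simps\<close>)
  have g: "real (Suc (Suc m)) = y + 2" "(2::real) ^ (1 + 2*Suc (Suc m)) = 4*Q"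
    "harm (Suc (Suc m)) = h1 + 1/(y+2)" "harm (2*Suc (Suc m)) = h2 + 1/(2*y+3) + 1/(2*y+4)"
    unfolding y_def Q_def h1_def h2_def harm2
    by (simp_all add: harm_Suc power_add power_mult divide_inverse)
  have "RR (Suc (Suc m)) = (y+2)*(1/(1-2*(y+2)))*(1/(4*Q))*C3*((3*(h1+1/(y+2)) - 4*(h2+1/(2*y+3)+1/(2*y+4))) - (2+4*(y+2))*(1/(1-2*(y+2))))"
    unfolding RR_def g C3_def[symmetric]
    by (rule gen_form) (use Q0 y0 in auto)
  then show ?case using fin by simp
qed

theorem theorem8:
  fixes n :: nat
  shows "(\<Sum>k=0..n. (-1/4::real)^k * real (n choose k) * real ((2*k) choose k) * real k * harm (2*k))
    = real n / ((1 - 2 * real n) * 2 ^ (1 + 2*n)) * real ((2*n) choose n)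
      * (3 * harm n - 4 * harm (2*n) - (2 + 4 * real n) / (1 - 2 * real n))"
proof -
  have "(\<Sum>k=0..n. (-1/4::real)^k * real (n choose k) * real ((2*k) choose k) * real k * harm (2*k)) = SS n"
    unfolding SS_def Fh_def dd_def by (rule sum.cong) (simp_all add: mult_ac)
  also have "\<dots> = RR n"
  proof (cases n)
    case 0 then show ?thesis by (simp add: SS_def RR_def Fh_def)
  next
    case (Suc m) then show ?thesis by (simp only: SS_RR)
  qed
  finally show ?thesis unfolding RR_def .
qed

end
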